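(* Let $X$ and $Y$ be linear spaces and let $f:X\to Y$ be a mapping. Then $f$ is additive, i.e. $f(x+y)=f(x)+f(y)$ for all $x,y\in X$, if and only if $$3f(x+3y)-f(3x+y)=12[f(x+y)+f(x-y)]-24f(x)+8f(y)$$ for all $x,y\in X$. *)

theory Defs
  imports Complex_Main
begin

end

theory Submission
  imports Defs
begin

lemma three_R: "(3::real) *\<^sub>R v = v + v + (v::'a::real_vector)"
proof -
  have "(3::real) = 1 + 1 + 1" by simp
  then show ?thesis by (metis scaleR_left_distrib scaleR_one)
qed

lemma col1: "v + b *\<^sub>R v = (1 + b) *\<^sub>R (v::'a::real_vector)"
  by (simp add: scaleR_add_left)
lemma col2: "b *\<^sub>R v + v = (b + 1) *\<^sub>R (v::'a::real_vector)"
  by (simp add: scaleR_add_left)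
lemma nb0: "(numeral (Num.Bit0 n)::real) *\<^sub>R v = numeral n *\<^sub>R v + numeral n *\<^sub>R (v::'a::real_vector)"
  by (simp only: numeral_Bit0 scaleR_add_left)
lemma nb1: "(numeral (Num.Bit1 n)::real) *\<^sub>R v = numeral n *\<^sub>R v + numeral n *\<^sub>R v + (v::'a::real_vector)"
  by (simp only: numeral_Bit1 scaleR_add_left scaleR_one)
lemmas expand = nb0 nb1

theorem lemma2p1:
  fixes f :: "'a::real_vector \<Rightarrow> 'b::real_vector"
  shows "(\<forall>x y. f (x + y) = f x + f y) \<longleftrightarrow>
    (\<forall>x y. 3 *\<^sub>R f (x + 3 *\<^sub>R y) - f (3 *\<^sub>R x + y)
       = 12 *\<^sub>R (f (x + y) + f (x - y)) - 24 *\<^sub>R f x + 8 *\<^sub>R f y)"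
proof
  assume A: "\<forall>x y. f (x + y) = f x + f y"
  have z: "f 0 = 0" using A[rule_format, of 0 0] by simp
  have n: "f (- x) = - f x" for x using A[rule_format, of x "-x"] z
    by (simp add: eq_neg_iff_add_eq_0 add.commute)
  have d: "f (x - y) = f x - f y" for x y
    using A[rule_format, of x "-y"] n by simp
  have t: "f (3 *\<^sub>R x) = 3 *\<^sub>R f x" for x
    unfolding three_R using A by simp
  show "\<forall>x y. 3 *\<^sub>R f (x + 3 *\<^sub>R y) - f (3 *\<^sub>R x + y)
       = 12 *\<^sub>R (f (x + y) + f (x - y)) - 24 *\<^sub>R f x + 8 *\<^sub>R f y"
    using A d t by (simp add: algebra_simps expand)
next
  assume H: "\<forall>x y. 3 *\<^sub>R f (x + 3 *\<^sub>R y) - f (3 *\<^sub>R x + y)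
       = 12 *\<^sub>R (f (x + y) + f (x - y)) - 24 *\<^sub>R f x + 8 *\<^sub>R f y"
  have z: "f 0 = 0" using H[rule_format, of 0 0] by (simp add: algebra_simps col1 col2 flip: scaleR_add_left)
  have t: "f (3 *\<^sub>R x) = 3 *\<^sub>R f x" for x
    using H[rule_format, of x 0] z by (simp add: algebra_simps expand)
  have n: "f (- x) = - f x" for x
  proof -
    have "3 *\<^sub>R f (3 *\<^sub>R x) - f x = 12 *\<^sub>R (f x + f (- x)) + 8 *\<^sub>R f x"
      using H[rule_format, of 0 x] z by simp
    then have "9 *\<^sub>R f x = (f x + 8 *\<^sub>R f x) + 12 *\<^sub>R (f x + f (- x))" using t by (simp add: diff_eq_eq ac_simps)
    moreover have "f x + 8 *\<^sub>R f x = 9 *\<^sub>R f x" by (simp add: col1)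
    ultimately have "12 *\<^sub>R (f x + f (- x)) = 0" by simp
    then show ?thesis by (simp add: eq_neg_iff_add_eq_0 add.commute)
  qed
  have P: "f (x + 3 *\<^sub>R y) = 6 *\<^sub>R f (x + y) + 3 *\<^sub>R f (x - y) - 8 *\<^sub>R f x" for x y
  proof -
    have e1: "3 *\<^sub>R f (x + 3 *\<^sub>R y) - f (3 *\<^sub>R x + y)
       = 12 *\<^sub>R (f (x + y) + f (x - y)) - 24 *\<^sub>R f x + 8 *\<^sub>R f y"
      using H by blast
    have e2: "3 *\<^sub>R f (3 *\<^sub>R x + y) - f (x + 3 *\<^sub>R y)
       = 12 *\<^sub>R (f (x + y) - f (x - y)) - 24 *\<^sub>R f y + 8 *\<^sub>R f x"
      using H[rule_format, of y x] n[of "x - y"] by (simp add: add.commute)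
    have "8 *\<^sub>R f (x + 3 *\<^sub>R y) = 3 *\<^sub>R (3 *\<^sub>R f (x + 3 *\<^sub>R y) - f (3 *\<^sub>R x + y))
        + (3 *\<^sub>R f (3 *\<^sub>R x + y) - f (x + 3 *\<^sub>R y))"
      by (simp add: algebra_simps expand)
    also have "\<dots> = 8 *\<^sub>R (6 *\<^sub>R f (x + y) + 3 *\<^sub>R f (x - y) - 8 *\<^sub>R f x)"
      unfolding e1 e2 by (simp add: algebra_simps expand)
    finally show ?thesis by simp
  qed
  have dbl: "f (2 *\<^sub>R x) = 2 *\<^sub>R f x" for x
  proof -
    have "f (x + 3 *\<^sub>R (- x)) = 6 *\<^sub>R f (x + - x) + 3 *\<^sub>R f (x - - x) - 8 *\<^sub>R f x"
      by (rule P)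
    moreover have "x + 3 *\<^sub>R (- x) = - (2 *\<^sub>R x)" "x - - x = 2 *\<^sub>R x"
      by (simp_all add: algebra_simps scaleR_2 three_R)
    ultimately have "- f (2 *\<^sub>R x) = 3 *\<^sub>R f (2 *\<^sub>R x) - 8 *\<^sub>R f x" using z n by simp
    then have "4 *\<^sub>R f (2 *\<^sub>R x) = 8 *\<^sub>R f x" by (simp add: algebra_simps expand)
    then have "(1/4) *\<^sub>R (4 *\<^sub>R f (2 *\<^sub>R x)) = (1/4) *\<^sub>R (8 *\<^sub>R f x)" by simp
    then show ?thesis by simp
  qed
  have four: "f (4 *\<^sub>R x) = 4 *\<^sub>R f x" for x
    using dbl[of "2 *\<^sub>R x"] dbl[of x] by simp
  show "\<forall>x y. f (x + y) = f x + f y"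
  proof (intro allI)
    fix a b :: 'a
    have nab: "f (- a - b) = - f (a + b)" using n[of "a+b"] by simp
    have r1: "f (- (a + b) + 3 *\<^sub>R (b - a)) = 6 *\<^sub>R f (- (a + b) + (b - a)) + 3 *\<^sub>R f (- (a + b) - (b - a)) - 8 *\<^sub>R f (- (a + b))"
      by (rule P)
    have "- (a + b) + 3 *\<^sub>R (b - a) = - (2 *\<^sub>R (2 *\<^sub>R a - b))"
      "- (a + b) + (b - a) = - (2 *\<^sub>R a)" "- (a + b) - (b - a) = - (2 *\<^sub>R b)"
      by (simp_all add: algebra_simps expand)
    with r1 have r1': "- (2 *\<^sub>R f (2 *\<^sub>R a - b)) = - (12 *\<^sub>R f a) - 6 *\<^sub>R f b + 8 *\<^sub>R f (a + b)"
      using n dbl nab by simp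
    have nb2: "f (b - 2 *\<^sub>R a) = - f (2 *\<^sub>R a - b)" using n[of "2 *\<^sub>R a - b"] by simp
    have r2: "f ((b - 2 *\<^sub>R a) + 3 *\<^sub>R (2 *\<^sub>R a + b)) = 6 *\<^sub>R f ((b - 2 *\<^sub>R a) + (2 *\<^sub>R a + b)) + 3 *\<^sub>R f ((b - 2 *\<^sub>R a) - (2 *\<^sub>R a + b)) - 8 *\<^sub>R f (b - 2 *\<^sub>R a)"
      by (rule P)
    have "(b - 2 *\<^sub>R a) + 3 *\<^sub>R (2 *\<^sub>R a + b) = 4 *\<^sub>R (a + b)"
      "(b - 2 *\<^sub>R a) + (2 *\<^sub>R a + b) = 2 *\<^sub>R b" "(b - 2 *\<^sub>R a) - (2 *\<^sub>R a + b) = - (4 *\<^sub>R a)"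
      by (simp_all add: algebra_simps expand)
    with r2 have r2': "4 *\<^sub>R f (a + b) = 12 *\<^sub>R f b - 12 *\<^sub>R f a + 8 *\<^sub>R f (2 *\<^sub>R a - b)"
      using n dbl four nb2 by simp
    have w2: "2 *\<^sub>R f (2 *\<^sub>R a - b) = 2 *\<^sub>R (6 *\<^sub>R f a + 3 *\<^sub>R f b - 4 *\<^sub>R f (a + b))"
      using r1' by (simp add: algebra_simps)
    then have w: "f (2 *\<^sub>R a - b) = 6 *\<^sub>R f a + 3 *\<^sub>R f b - 4 *\<^sub>R f (a + b)" by simp
    have "4 *\<^sub>R f (a + b) = 4 *\<^sub>R (3 *\<^sub>R f b - 3 *\<^sub>R f a + 2 *\<^sub>R f (2 *\<^sub>R a - b))"
      using r2' by (simp add: algebra_simps)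
    then have "f (a + b) = 3 *\<^sub>R f b - 3 *\<^sub>R f a + 2 *\<^sub>R f (2 *\<^sub>R a - b)" by simp
    then have "f (a + b) = 9 *\<^sub>R f b + 9 *\<^sub>R f a - 8 *\<^sub>R f (a + b)"
      unfolding w by (simp add: algebra_simps expand)
    then have "9 *\<^sub>R f (a + b) = 9 *\<^sub>R (f a + f b)" by (simp add: algebra_simps expand)
    then show "f (a + b) = f a + f b" by simp
  qed
qed

end
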